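(* Let $f\in\mathbb{C}[z_1,\dots,z_n]$ be homogeneous. Then $\mathcal{I}(f)$ is a closed cone (i.e. closed, and $\lambda\mathbf y\in\mathcal I(f)$ for all $\mathbf y\in\mathcal I(f)$, $\lambda\ge 0$), in general non-convex. Every connected component of $\mathbb{R}^n\setminus\mathcal{I}(f)$ is a hyperbolicity cone of $f$, and the components occur in pairs: if $C$ is a component then so is $-C$. In particular, $\mathbb{R}^n\setminus\mathcal{I}(f)$ has no bounded connected components.
   Context: For $f\in\mathbb{C}[z_1,\dots,z_n]$, $\mathcal{V}(f)\subseteq\mathbb{C}^n$ denotes its complex zero set and the imaginary projection of $f$ is $\mathcal{I}(f)=\{\Im(\mathbf z):\mathbf z\in\mathcal V(f)\}\subseteq\mathbb{R}^n$, where $\Im$ is taken componentwise. A homogeneous polynomial $f\in\mathbb{C}[z_1,\dots,z_n]$ is hyperbolic in direction $\mathbf e\in\mathbb{R}^n$ if $f(\mathbf e)\neq 0$ and for every $\mathbf x\in\mathbb{R}^n$ the univariate polynomial $t\mapsto f(\mathbf x+t\mathbf e)$ has only real roots. In that case the hyperbolicity cone of $f$ with respect to $\mathbf e$ is $C(\mathbf e)=\{\mathbf x\in\mathbb{R}^n: f(\mathbf x+t\mathbf e)=0\Rightarrow t<0\}$. The hyperbolicity cones of $f$ are the sets $C(\mathbf e)$ for all directions $\mathbf e$ in which $f$ is hyperbolic. *)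

theory Defs
  imports "HOL-Analysis.Analysis"
begin

text \<open>A polynomial in \<open>\<complex>[z_i : i \<in> 'n]\<close> is represented by its coefficient function
  on exponent vectors \<open>'n \<Rightarrow> nat\<close>; it must have finite support.\<close>

type_synonym 'n cpoly = "('n \<Rightarrow> nat) \<Rightarrow> complex"

definition is_mpoly :: "('n::finite) cpoly \<Rightarrow> bool" where
  "is_mpoly c \<longleftrightarrow> finite {\<alpha>. c \<alpha> \<noteq> 0}"

definition mpoly_eval :: "('n::finite) cpoly \<Rightarrow> complex ^ 'n \<Rightarrow> complex" where
  "mpoly_eval c z = (\<Sum>\<alpha> \<in> {\<alpha>. c \<alpha> \<noteq> 0}. c \<alpha> * (\<Prod>i\<in>UNIV. (z $ i) ^ (\<alpha> i)))"

definition homogeneous_mpoly :: "('n::finite) cpoly \<Rightarrow> bool" where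
  "homogeneous_mpoly c \<longleftrightarrow> (\<exists>d. \<forall>\<alpha>. c \<alpha> \<noteq> 0 \<longrightarrow> (\<Sum>i\<in>UNIV. \<alpha> i) = d)"

definition zero_set :: "('n::finite) cpoly \<Rightarrow> (complex ^ 'n) set" where
  "zero_set c = {z. mpoly_eval c z = 0}"

definition imag_proj :: "('n::finite) cpoly \<Rightarrow> (real ^ 'n) set" where
  "imag_proj c = {(\<chi> i. Im (z $ i)) | z. z \<in> zero_set c}"

definition cvec :: "real ^ 'n \<Rightarrow> complex ^ 'n" where
  "cvec x = (\<chi> i. complex_of_real (x $ i))"

definition hyperbolic :: "('n::finite) cpoly \<Rightarrow> real ^ 'n \<Rightarrow> bool" where
  "hyperbolic c e \<longleftrightarrow> mpoly_eval c (cvec e) \<noteq> 0 \<and>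
     (\<forall>x :: real ^ 'n. \<forall>t :: complex.
        mpoly_eval c (cvec x + t *s cvec e) = 0 \<longrightarrow> t \<in> \<real>)"

definition hyp_cone :: "('n::finite) cpoly \<Rightarrow> real ^ 'n \<Rightarrow> (real ^ 'n) set" where
  "hyp_cone c e = {x. \<forall>t :: real. mpoly_eval c (cvec (x + t *\<^sub>R e)) = 0 \<longrightarrow> t < 0}"

end

theory Submission
  imports Defs "HOL-Computational_Algebra.Fundamental_Theorem_Algebra"
begin

lemma coeff_mult_le:
  fixes p q :: "'a::idom poly"
  assumes "degree p \<le> m" "degree q \<le> n"
  shows "coeff (p*q) (m+n) = coeff p m * coeff q n"
proof (cases "degree p = m \<and> degree q = n")
  case True thus ?thesis using coeff_mult_degree_sum by metis
next
  case False
  hence "degree (p*q) < m + n" using degree_mult_le[of p q] assms by linarith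
  hence "coeff (p*q) (m+n) = 0" by (simp add: coeff_eq_0)
  moreover have "coeff p m * coeff q n = 0" using False assms
    by (metis coeff_eq_0 le_neq_implies_less mult_eq_0_iff)
  ultimately show ?thesis by simp
qed

lemma coeff_power_le:
  fixes p :: "'a::idom poly"
  assumes "degree p \<le> n"
  shows "coeff (p^k) (k*n) = coeff p n ^ k"
proof (induction k)
  case 0 thus ?case by simp
next
  case (Suc k)
  have "degree (p^k) \<le> k*n" using assms
    by (metis degree_power_le le_trans mult.commute mult_le_mono2)
  hence "coeff (p * p^k) (n + k*n) = coeff p n * coeff (p^k) (k*n)"
    by (rule coeff_mult_le[OF assms])
  thus ?case using Suc by (simp add: add.commute)
qed

lemma coeff_prod_le:
  fixes p :: "'i \<Rightarrow> 'a::idom poly"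
  assumes "finite I" "\<And>i. i \<in> I \<Longrightarrow> degree (p i) \<le> n i"
  shows "coeff (\<Prod>i\<in>I. p i) (\<Sum>i\<in>I. n i) = (\<Prod>i\<in>I. coeff (p i) (n i))"
  using assms
proof (induction I rule: finite_induct)
  case empty thus ?case by simp
next
  case (insert x F)
  have dF: "degree (\<Prod>i\<in>F. p i) \<le> (\<Sum>i\<in>F. n i)"
  proof -
    have "degree (\<Prod>i\<in>F. p i) \<le> (\<Sum>i\<in>F. degree (p i))" using degree_prod_sum_le[of F p] insert.hyps(1) by (simp add: o_def)
    also have "\<dots> \<le> (\<Sum>i\<in>F. n i)" by (rule sum_mono) (use insert.prems in auto)
    finally show ?thesis .
  qed
  have "coeff (p x * (\<Prod>i\<in>F. p i)) (n x + (\<Sum>i\<in>F. n i)) = coeff (p x) (n x) * coeff (\<Prod>i\<in>F. p i) (\<Sum>i\<in>F. n i)"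
    by (rule coeff_mult_le[OF _ dF]) (use insert.prems in auto)
  moreover have "coeff (\<Prod>i\<in>F. p i) (\<Sum>i\<in>F. n i) = (\<Prod>i\<in>F. coeff (p i) (n i))"
    using insert.IH insert.prems by blast
  ultimately show ?case using insert.hyps by simp
qed

lemma hom_eval:
  assumes "\<forall>\<alpha>. f \<alpha> \<noteq> 0 \<longrightarrow> (\<Sum>i\<in>UNIV. \<alpha> i) = d"
  shows "mpoly_eval (f::('n::finite) cpoly) (c *s z) = c^d * mpoly_eval f z"
  unfolding mpoly_eval_def sum_distrib_left
proof (rule sum.cong[OF refl])
  fix \<alpha> assume "\<alpha> \<in> {\<alpha>. f \<alpha> \<noteq> 0}"
  hence "(\<Sum>i\<in>UNIV. \<alpha> i) = d" using assms by auto
  hence e: "(\<Prod>i\<in>UNIV. c ^ \<alpha> i) = c^d" using power_sum[of c \<alpha> UNIV] by simp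
  have "(\<Prod>i\<in>UNIV. ((c *s z) $ i) ^ \<alpha> i) = (\<Prod>i\<in>UNIV. c ^ \<alpha> i * (z $ i) ^ \<alpha> i)"
    by (simp only: vector_smult_component power_mult_distrib)
  also have "\<dots> = (\<Prod>i\<in>UNIV. c ^ \<alpha> i) * (\<Prod>i\<in>UNIV. (z $ i) ^ \<alpha> i)"
    by (rule prod.distrib)
  finally show "f \<alpha> * (\<Prod>i\<in>UNIV. ((c *s z) $ i) ^ \<alpha> i) = c ^ d * (f \<alpha> * (\<Prod>i\<in>UNIV. (z $ i) ^ \<alpha> i))"
    using e by simp
qed

lemma cont_eval: "continuous_on UNIV (mpoly_eval (f::('n::finite) cpoly))"
  unfolding mpoly_eval_def
  by (intro continuous_on_sum continuous_on_mult continuous_on_const continuous_on_prod continuous_on_power continuous_on_component continuous_on_id)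
lemma line_poly:
  assumes "is_mpoly f" "\<forall>\<alpha>. f \<alpha> \<noteq> 0 \<longrightarrow> (\<Sum>i\<in>UNIV. \<alpha> i) = d"
  shows "\<exists>P. (\<forall>\<tau>. poly P \<tau> = mpoly_eval (f::('n::finite) cpoly) (a + \<tau> *s b)) \<and> degree P \<le> d
      \<and> coeff P d = mpoly_eval f b"
proof -
  define S where "S = {\<alpha>. f \<alpha> \<noteq> 0}"
  have fin: "finite S" using assms(1) unfolding is_mpoly_def S_def .
  define P where "P = (\<Sum>\<alpha>\<in>S. smult (f \<alpha>) (\<Prod>i\<in>UNIV. [:a$i, b$i:] ^ \<alpha> i))"
  have ev: "poly P \<tau> = mpoly_eval f (a + \<tau> *s b)" for \<tau>
    unfolding P_def mpoly_eval_def S_def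
    by (simp add: poly_sum poly_prod)
  have dg: "degree (\<Prod>i\<in>UNIV. [:a$i, b$i:] ^ \<alpha> i) \<le> d" if "\<alpha> \<in> S" for \<alpha>
  proof -
    have "degree (\<Prod>i\<in>UNIV. [:a$i, b$i:] ^ \<alpha> i) \<le> (\<Sum>i\<in>UNIV. degree ([:a$i, b$i:] ^ \<alpha> i))"
      using degree_prod_sum_le[of UNIV "\<lambda>i. [:a$i, b$i:] ^ \<alpha> i"] by (simp add: o_def)
    also have "\<dots> \<le> (\<Sum>i\<in>UNIV. \<alpha> i)"
    proof (rule sum_mono)
      fix i :: 'n
      have "degree ([:a$i, b$i:] ^ \<alpha> i) \<le> degree [:a$i, b$i:] * \<alpha> i" by (rule degree_power_le)
      also have "\<dots> \<le> 1 * \<alpha> i" by (intro mult_le_mono1) simp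
      finally show "degree ([:a$i, b$i:] ^ \<alpha> i) \<le> \<alpha> i" by simp
    qed
    finally show ?thesis using that assms(2) S_def by auto
  qed
  have "degree P \<le> d" unfolding P_def
  proof (rule degree_sum_le[OF fin])
    fix \<alpha> assume "\<alpha> \<in> S"
    show "degree (smult (f \<alpha>) (\<Prod>i\<in>UNIV. [:a$i, b$i:] ^ \<alpha> i)) \<le> d"
      using order.trans[OF degree_smult_le dg[OF \<open>\<alpha> \<in> S\<close>]] .
  qed
  moreover have "coeff P d = mpoly_eval f b"
  proof -
    have "coeff (\<Prod>i\<in>UNIV. [:a$i, b$i:] ^ \<alpha> i) d = (\<Prod>i\<in>UNIV. (b$i) ^ \<alpha> i)" if "\<alpha> \<in> S" for \<alpha>
    proof -
      have "(\<Sum>i\<in>UNIV. \<alpha> i) = d" using that assms(2) S_def by auto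
      moreover have "coeff (\<Prod>i\<in>UNIV. [:a$i, b$i:] ^ \<alpha> i) (\<Sum>i\<in>UNIV. \<alpha> i * 1)
          = (\<Prod>i\<in>UNIV. coeff ([:a$i, b$i:] ^ \<alpha> i) (\<alpha> i * 1))"
        by (rule coeff_prod_le) (auto intro: order.trans[OF degree_power_le])
      moreover have "coeff ([:a$i, b$i:] ^ \<alpha> i) (\<alpha> i * 1) = (b$i) ^ \<alpha> i" for i
        using coeff_power_le[of "[:a$i, b$i:]" 1 "\<alpha> i"] by simp
      ultimately show ?thesis by simp
    qed
    thus ?thesis unfolding P_def mpoly_eval_def S_def coeff_sum
      by (intro sum.cong) auto
  qed
  ultimately show ?thesis using ev by blast
qed

lemma norm_smult_cvec: "norm (c *s (x::complex^'n)) = norm c * norm x"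
  unfolding norm_vec_def
  by (simp add: norm_mult L2_set_right_distrib)

context
  fixes f :: "('n::finite) cpoly" and d :: nat
  assumes mp: "is_mpoly f" and hd: "\<forall>\<alpha>. f \<alpha> \<noteq> 0 \<longrightarrow> (\<Sum>i\<in>UNIV. \<alpha> i) = d"
begin

lemma factor:
  assumes "mpoly_eval f b \<noteq> 0"
  shows "\<exists>\<rho>::nat\<Rightarrow>complex. \<forall>\<tau>. mpoly_eval f (a + \<tau> *s b) = mpoly_eval f b * (\<Prod>j<d. \<tau> - \<rho> j)"
proof -
  obtain P where P: "\<forall>\<tau>. poly P \<tau> = mpoly_eval f (a + \<tau> *s b)" "degree P \<le> d" "coeff P d = mpoly_eval f b"
    using line_poly[OF mp hd] by blast
  have "d \<le> degree P" using P(3) assms by (intro le_degree) simp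
  hence dP: "degree P = d" using P(2) by simp
  hence lc: "lead_coeff P = mpoly_eval f b" using P(3) by simp
  obtain root where r: "smult (lead_coeff P) (\<Prod>i<degree P. [:-root i, 1:]) = P"
    using complex_poly_decompose' by blast
  have "mpoly_eval f (a + \<tau> *s b) = mpoly_eval f b * (\<Prod>j<d. \<tau> - root j)" for \<tau>
  proof -
    have "mpoly_eval f (a + \<tau> *s b) = poly P \<tau>" using P(1) by simp
    also have "\<dots> = poly (smult (lead_coeff P) (\<Prod>i<degree P. [:-root i, 1:])) \<tau>" using r by simp
    also have "\<dots> = mpoly_eval f b * (\<Prod>j<d. \<tau> - root j)"
      by (simp add: dP poly_prod P(3))
    finally show ?thesis .
  qed
  thus ?thesis by blast
qed

lemma cont_line: "continuous_on UNIV (\<lambda>a. mpoly_eval f (a + t *s b))"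
  by (rule continuous_on_compose2[OF cont_eval]) (auto intro!: continuous_intros)

lemma root_near:
  assumes Fb: "mpoly_eval f b \<noteq> 0" and z: "mpoly_eval f (a + t0 *s b) = 0" and "\<epsilon> > 0"
  shows "\<exists>\<delta>>0. \<forall>a'. dist a' a < \<delta> \<longrightarrow> (\<exists>\<tau>. norm (\<tau> - t0) < \<epsilon> \<and> mpoly_eval f (a' + \<tau> *s b) = 0)"
proof -
  define \<eta> where "\<eta> = norm (mpoly_eval f b) * \<epsilon> ^ d"
  have "\<eta> > 0" using Fb \<open>\<epsilon> > 0\<close> unfolding \<eta>_def by simp
  then obtain \<delta> where "\<delta> > 0" and \<delta>: "\<forall>a'. dist a' a < \<delta> \<longrightarrow>
      dist (mpoly_eval f (a' + t0 *s b)) (mpoly_eval f (a + t0 *s b)) < \<eta>"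
    using cont_line[of t0 b] unfolding continuous_on_iff by blast
  have "\<exists>\<tau>. norm (\<tau> - t0) < \<epsilon> \<and> mpoly_eval f (a' + \<tau> *s b) = 0" if "dist a' a < \<delta>" for a'
  proof (rule ccontr)
    assume no: "\<not> ?thesis"
    obtain \<rho> where \<rho>: "\<forall>\<tau>. mpoly_eval f (a' + \<tau> *s b) = mpoly_eval f b * (\<Prod>j<d. \<tau> - \<rho> j)"
      using factor[OF Fb] by blast
    have ge: "\<epsilon> \<le> norm (t0 - \<rho> j)" if "j < d" for j
    proof (rule ccontr)
      assume "\<not> \<epsilon> \<le> norm (t0 - \<rho> j)"
      hence "norm (\<rho> j - t0) < \<epsilon>" by (simp add: norm_minus_commute)
      moreover have "(\<Prod>i<d. \<rho> j - \<rho> i) = 0" using that by (intro prod_zero) auto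
      hence "mpoly_eval f (a' + \<rho> j *s b) = 0" using \<rho> by simp
      ultimately show False using no by blast
    qed
    have "\<epsilon> ^ d = (\<Prod>j<d. \<epsilon>)" by simp
    also have "\<dots> \<le> (\<Prod>j<d. norm (t0 - \<rho> j))" by (rule prod_mono) (use ge \<open>\<epsilon> > 0\<close> in auto)
    finally have "\<epsilon> ^ d \<le> norm (\<Prod>j<d. t0 - \<rho> j)" by (simp add: prod_norm)
    hence "\<eta> \<le> norm (mpoly_eval f b) * norm (\<Prod>j<d. t0 - \<rho> j)"
      unfolding \<eta>_def by (simp add: mult_left_mono)
    also have "\<dots> = norm (mpoly_eval f (a' + t0 *s b))" using \<rho> by (simp add: norm_mult)
    finally have "\<eta> \<le> norm (mpoly_eval f (a' + t0 *s b))" .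
    moreover have "norm (mpoly_eval f (a' + t0 *s b)) < \<eta>" using \<delta> that z by (simp add: dist_norm)
    ultimately show False by simp
  qed
  thus ?thesis using \<open>\<delta> > 0\<close> by blast
qed

lemma root_bound:
  assumes Fb: "mpoly_eval f b \<noteq> 0"
  shows "\<exists>R. \<forall>a \<sigma>. norm a \<le> M \<longrightarrow> mpoly_eval f (a + \<sigma> *s b) = 0 \<longrightarrow> norm \<sigma> \<le> R"
proof -
  obtain \<delta> where "\<delta> > 0" and \<delta>: "\<forall>z. dist z b < \<delta> \<longrightarrow> dist (mpoly_eval f z) (mpoly_eval f b) < norm (mpoly_eval f b)"
    using cont_eval[of f] Fb unfolding continuous_on_iff by (metis UNIV_I zero_less_norm_iff)
  have "norm \<sigma> \<le> M / \<delta>" if "norm a \<le> M" "mpoly_eval f (a + \<sigma> *s b) = 0" for a \<sigma>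
  proof (rule ccontr)
    assume "\<not> norm \<sigma> \<le> M / \<delta>"
    hence lt: "M / \<delta> < norm \<sigma>" by simp
    have "0 \<le> M" using that(1) norm_ge_zero order.trans by blast
    hence "0 \<le> M / \<delta>" using \<open>\<delta> > 0\<close> by simp
    hence "\<sigma> \<noteq> 0" using lt by auto
    have "norm a < \<delta> * norm \<sigma>" using lt that(1) \<open>\<delta> > 0\<close> by (simp add: field_simps)
    moreover have "norm (inverse \<sigma> *s a) = norm a / norm \<sigma>"
      by (simp add: norm_smult_cvec norm_inverse divide_inverse mult.commute)
    ultimately have "norm (inverse \<sigma> *s a) < \<delta>" using \<open>\<sigma> \<noteq> 0\<close>
      by (simp add: divide_less_eq)
    hence "dist (inverse \<sigma> *s a + b) b < \<delta>" by (simp add: dist_norm)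
    hence "mpoly_eval f (inverse \<sigma> *s a + b) \<noteq> 0" using \<delta> by fastforce
    moreover have "a + \<sigma> *s b = \<sigma> *s (inverse \<sigma> *s a + b)" using \<open>\<sigma> \<noteq> 0\<close>
      by (simp add: vector_add_ldistrib vector_smult_assoc)
    hence "mpoly_eval f (a + \<sigma> *s b) = \<sigma>^d * mpoly_eval f (inverse \<sigma> *s a + b)"
      using hom_eval[OF hd, of \<sigma> "inverse \<sigma> *s a + b"] by metis
    ultimately show False using that(2) \<open>\<sigma> \<noteq> 0\<close> by simp
  qed
  thus ?thesis by blast
qed

end

lemma cvec_add: "cvec (x + y) = cvec x + cvec y"
  by (simp add: cvec_def vec_eq_iff)
lemma cvec_scale: "cvec (t *\<^sub>R x) = complex_of_real t *s cvec x"
  by (simp add: cvec_def vec_eq_iff)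
lemma cvec_minus: "cvec (- x) = - cvec x"
  by (simp add: cvec_def vec_eq_iff)
lemma cvec_zero: "cvec 0 = 0"
  by (simp add: cvec_def vec_eq_iff)
lemma norm_cvec: "norm (cvec x) = norm x"
  by (simp add: cvec_def norm_vec_def)
lemma cvec_nth: "cvec x $ i = complex_of_real (x $ i)"
  by (simp add: cvec_def)

lemma cont_cvec: "continuous_on S (\<lambda>z. cvec (g z))" if "continuous_on S g"
  unfolding cvec_def by (intro continuous_intros that)

lemma cont_smult: "continuous_on S (\<lambda>z. c z *s v)" if "continuous_on S c" for v :: "complex^'n"
  unfolding vector_scalar_mult_def by (intro continuous_intros that)

lemma imag_proj_iff:
  "y \<in> imag_proj f \<longleftrightarrow> (\<exists>x. mpoly_eval f (cvec x + \<i> *s cvec y) = 0)"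
proof
  assume "y \<in> imag_proj f"
  then obtain z where z: "mpoly_eval f z = 0" "y = (\<chi> i. Im (z $ i))"
    unfolding imag_proj_def zero_set_def by blast
  have "z = cvec (\<chi> i. Re (z $ i)) + \<i> *s cvec y"
    using z(2) by (simp add: vec_eq_iff cvec_def complex_eq_iff)
  thus "\<exists>x. mpoly_eval f (cvec x + \<i> *s cvec y) = 0" using z(1) by metis
next
  assume "\<exists>x. mpoly_eval f (cvec x + \<i> *s cvec y) = 0"
  then obtain x where x: "mpoly_eval f (cvec x + \<i> *s cvec y) = 0" by blast
  have "y = (\<chi> i. Im ((cvec x + \<i> *s cvec y) $ i))" by (simp add: vec_eq_iff cvec_def)
  thus "y \<in> imag_proj f" using x unfolding imag_proj_def zero_set_def by blast
qed

lemma closed_roots_gen: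
  fixes G :: "'a::real_normed_vector \<Rightarrow> 'b::{real_normed_vector,heine_borel} \<Rightarrow> complex"
  assumes cont: "continuous_on UNIV (\<lambda>z. G (fst z) (snd z))" and Q: "closed Q"
    and bnd: "\<And>M. \<exists>R. \<forall>p \<sigma>. norm p \<le> M \<longrightarrow> \<sigma> \<in> Q \<longrightarrow> G p \<sigma> = 0 \<longrightarrow> norm \<sigma> \<le> R"
  shows "closed {p. \<exists>\<sigma>\<in>Q. G p \<sigma> = 0}"
  unfolding closed_sequential_limits
proof (intro allI impI, elim conjE)
  fix x l assume xin: "\<forall>n. x n \<in> {p. \<exists>\<sigma>\<in>Q. G p \<sigma> = 0}" and lim: "x \<longlonglongrightarrow> l"
  obtain s where s: "\<And>n. s n \<in> Q" "\<And>n. G (x n) (s n) = 0" using xin by (simp add: Bex_def) metis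
  have "bounded (range x)" using lim by (intro convergent_imp_bounded)
  then obtain M where M: "\<And>n. norm (x n) \<le> M" unfolding bounded_iff by blast
  obtain R where R: "\<forall>p \<sigma>. norm p \<le> M \<longrightarrow> \<sigma> \<in> Q \<longrightarrow> G p \<sigma> = 0 \<longrightarrow> norm \<sigma> \<le> R" using bnd by blast
  have "bounded (range s)" unfolding bounded_iff using R M s by blast
  then obtain \<sigma> r where r: "strict_mono r" "(s \<circ> r) \<longlonglongrightarrow> \<sigma>"
    using bounded_imp_convergent_subsequence by blast
  have "\<sigma> \<in> Q" using closed_sequentially[OF Q _ r(2)] s by simp
  have xr: "(x \<circ> r) \<longlonglongrightarrow> l" using LIMSEQ_subseq_LIMSEQ[OF lim r(1)] .
  have "(\<lambda>n. (x (r n), s (r n))) \<longlonglongrightarrow> (l, \<sigma>)"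
    using tendsto_Pair[OF xr r(2)] by (simp add: o_def)
  hence "(\<lambda>n. G (fst (x (r n), s (r n))) (snd (x (r n), s (r n)))) \<longlonglongrightarrow> G (fst (l, \<sigma>)) (snd (l, \<sigma>))"
    by (intro continuous_on_tendsto_compose[OF cont]) auto
  hence "(\<lambda>n. 0) \<longlonglongrightarrow> G l \<sigma>" using s by simp
  hence "G l \<sigma> = 0" using LIMSEQ_unique tendsto_const by blast
  thus "l \<in> {p. \<exists>\<sigma>\<in>Q. G p \<sigma> = 0}" using \<open>\<sigma> \<in> Q\<close> by blast
qed

context
  fixes f :: "('n::finite) cpoly" and d :: nat
  assumes mp: "is_mpoly f" and hd: "\<forall>\<alpha>. f \<alpha> \<noteq> 0 \<longrightarrow> (\<Sum>i\<in>UNIV. \<alpha> i) = d"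
begin

definition "UU = {y. \<forall>x. mpoly_eval f (cvec x + \<i> *s cvec y) \<noteq> 0}"

lemma hom: "mpoly_eval f (c *s z) = c^d * mpoly_eval f z"
  by (rule hom_eval[OF hd])

lemma U_roots:
  assumes "e \<in> UU" "mpoly_eval f (cvec x + \<tau> *s cvec e) = 0"
  shows "Im \<tau> = 0"
proof (rule ccontr)
  assume b: "Im \<tau> \<noteq> 0"
  define b where "b = Im \<tau>"
  have "cvec x + \<tau> *s cvec e = complex_of_real b *s (cvec ((1/b) *\<^sub>R (x + Re \<tau> *\<^sub>R e)) + \<i> *s cvec e)"
    using b unfolding b_def by (simp add: vec_eq_iff cvec_def complex_eq_iff field_simps)
  hence "mpoly_eval f (cvec x + \<tau> *s cvec e) = (complex_of_real b)^d * mpoly_eval f (cvec ((1/b) *\<^sub>R (x + Re \<tau> *\<^sub>R e)) + \<i> *s cvec e)"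
    using hom by metis
  moreover have "mpoly_eval f (cvec ((1/b) *\<^sub>R (x + Re \<tau> *\<^sub>R e)) + \<i> *s cvec e) \<noteq> 0"
    using assms(1) unfolding UU_def by blast
  ultimately show False using assms(2) b b_def by simp
qed

lemma U_Fnz: assumes "e \<in> UU" shows "mpoly_eval f (cvec e) \<noteq> 0"
proof
  assume z: "mpoly_eval f (cvec e) = 0"
  have "mpoly_eval f (cvec 0 + \<i> *s cvec e) = \<i>^d * mpoly_eval f (cvec e)"
    using hom by (simp add: cvec_zero)
  thus False using z assms unfolding UU_def by auto
qed

lemma U_hyp: assumes "e \<in> UU" shows "hyperbolic f e"
  unfolding hyperbolic_def using U_Fnz[OF assms] U_roots[OF assms] complex_is_Real_iff by blast

lemma U_neg: assumes "y \<in> UU" shows "- y \<in> UU"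
  unfolding UU_def
proof (intro CollectI allI)
  fix x
  have "cvec x + \<i> *s cvec (- y) = (-1) *s (cvec (- x) + \<i> *s cvec y)"
    by (simp add: vec_eq_iff cvec_def)
  hence "mpoly_eval f (cvec x + \<i> *s cvec (- y)) = (-1)^d * mpoly_eval f (cvec (- x) + \<i> *s cvec y)"
    using hom by metis
  moreover have "mpoly_eval f (cvec (- x) + \<i> *s cvec y) \<noteq> 0" using assms unfolding UU_def by blast
  ultimately show "mpoly_eval f (cvec x + \<i> *s cvec (- y)) \<noteq> 0" by simp
qed

lemma imag_U: "imag_proj f = - UU"
  unfolding UU_def using imag_proj_iff by blast

lemma hc_iff: "x \<in> hyp_cone f e \<longleftrightarrow> (\<forall>t::real. mpoly_eval f (cvec x + complex_of_real t *s cvec e) = 0 \<longrightarrow> t < 0)"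
  unfolding hyp_cone_def by (simp add: cvec_add cvec_scale)

lemma H_self: assumes "mpoly_eval f (cvec e) \<noteq> 0" shows "e \<in> hyp_cone f e"
  unfolding hc_iff
proof (intro allI impI)
  fix t :: real assume z: "mpoly_eval f (cvec e + complex_of_real t *s cvec e) = 0"
  have "cvec e + complex_of_real t *s cvec e = complex_of_real (1 + t) *s cvec e"
    by (simp add: vec_eq_iff cvec_def algebra_simps)
  hence "(complex_of_real (1 + t))^d * mpoly_eval f (cvec e) = 0" using z hom by metis
  hence "1 + t = 0" using assms by (metis of_real_eq_0_iff power_eq_0_iff mult_eq_0_iff)
  thus "t < 0" by simp
qed

lemma H_scale: assumes "x \<in> hyp_cone f e" "l > 0" shows "l *\<^sub>R x \<in> hyp_cone f e"
  unfolding hc_iff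
proof (intro allI impI)
  fix t :: real assume z: "mpoly_eval f (cvec (l *\<^sub>R x) + complex_of_real t *s cvec e) = 0"
  have "cvec (l *\<^sub>R x) + complex_of_real t *s cvec e = complex_of_real l *s (cvec x + complex_of_real (t/l) *s cvec e)"
    using assms(2) by (simp add: vec_eq_iff cvec_def field_simps)
  hence "(complex_of_real l)^d * mpoly_eval f (cvec x + complex_of_real (t/l) *s cvec e) = 0" using z hom by metis
  hence "mpoly_eval f (cvec x + complex_of_real (t/l) *s cvec e) = 0" using assms(2) by simp
  hence "t / l < 0" using assms(1) unfolding hc_iff by blast
  thus "t < 0" using assms(2) by (simp add: divide_less_0_iff)
qed

lemma H_star: assumes "mpoly_eval f (cvec e) \<noteq> 0" "x \<in> hyp_cone f e" "0 \<le> s" "s \<le> 1"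
  shows "(1 - s) *\<^sub>R e + s *\<^sub>R x \<in> hyp_cone f e"
proof (cases "s = 0")
  case True thus ?thesis using H_self[OF assms(1)] by simp
next
  case False
  hence s: "s > 0" using assms by simp
  show ?thesis unfolding hc_iff
  proof (intro allI impI)
    fix t :: real assume z: "mpoly_eval f (cvec ((1 - s) *\<^sub>R e + s *\<^sub>R x) + complex_of_real t *s cvec e) = 0"
    have "cvec ((1 - s) *\<^sub>R e + s *\<^sub>R x) + complex_of_real t *s cvec e
        = complex_of_real s *s (cvec x + complex_of_real ((1 - s + t)/s) *s cvec e)"
      using s by (simp add: vec_eq_iff cvec_def field_simps)
    hence "(complex_of_real s)^d * mpoly_eval f (cvec x + complex_of_real ((1 - s + t)/s) *s cvec e) = 0" using z hom by metis
    hence "mpoly_eval f (cvec x + complex_of_real ((1 - s + t)/s) *s cvec e) = 0" using s by simp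
    hence "(1 - s + t) / s < 0" using assms(2) unfolding hc_iff by blast
    hence "1 - s + t < 0" using s by (simp add: divide_less_0_iff)
    thus "t < 0" using assms(4) by simp
  qed
qed

lemma H_connected: assumes "mpoly_eval f (cvec e) \<noteq> 0" shows "connected (hyp_cone f e)"
proof (rule starlike_imp_connected)
  show "starlike (hyp_cone f e)" unfolding starlike_def
  proof (intro bexI[of _ e] ballI)
    show "e \<in> hyp_cone f e" using H_self[OF assms] .
    fix x assume "x \<in> hyp_cone f e"
    thus "closed_segment e x \<subseteq> hyp_cone f e"
      using H_star[OF assms] by (auto simp: in_segment)
  qed
qed

lemma H_open: assumes Fe: "mpoly_eval f (cvec e) \<noteq> 0" shows "open (hyp_cone f e)"
proof -
  define G where "G = (\<lambda>x (t::real). mpoly_eval f (cvec x + complex_of_real t *s cvec e))"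
  have "closed {x. \<exists>t\<in>{t. 0 \<le> t}. G x t = 0}"
  proof (rule closed_roots_gen)
    show "continuous_on UNIV (\<lambda>z. G (fst z) (snd z))" unfolding G_def
      by (rule continuous_on_compose2[OF cont_eval]) (auto intro!: continuous_intros cont_cvec cont_smult)
    show "closed {t::real. 0 \<le> t}" by (rule closed_Collect_le) (auto intro: continuous_intros)
    fix M
    obtain R where R: "\<forall>a \<sigma>. norm a \<le> M \<longrightarrow> mpoly_eval f (a + \<sigma> *s cvec e) = 0 \<longrightarrow> norm \<sigma> \<le> R"
      using root_bound[OF mp hd Fe] by blast
    show "\<exists>R. \<forall>p \<sigma>. norm p \<le> M \<longrightarrow> \<sigma> \<in> {t. 0 \<le> t} \<longrightarrow> G p \<sigma> = 0 \<longrightarrow> norm \<sigma> \<le> R"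
    proof (rule exI[of _ R], intro allI impI)
      fix p and \<sigma> :: real assume "norm p \<le> M" "\<sigma> \<in> {t. 0 \<le> t}" "G p \<sigma> = 0"
      hence "cmod (complex_of_real \<sigma>) \<le> R" using R unfolding G_def by (metis norm_cvec)
      thus "norm \<sigma> \<le> R" by simp
    qed
  qed
  moreover have "- hyp_cone f e = {x. \<exists>t\<in>{t. 0 \<le> t}. G x t = 0}"
    unfolding G_def by (auto simp: hc_iff not_less) (meson not_less)
  ultimately show ?thesis by (metis closed_def double_compl)
qed

end

lemma cvec_diff: "cvec x - cvec y = cvec (x - y)"
  by (simp add: cvec_def vec_eq_iff)

lemma dist_cvec: "dist (cvec x + q) (cvec y + q) = dist x y"
  by (simp add: dist_norm cvec_diff norm_cvec)

context
  fixes f :: "('n::finite) cpoly" and d :: nat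
  assumes mp: "is_mpoly f" and hd: "\<forall>\<alpha>. f \<alpha> \<noteq> 0 \<longrightarrow> (\<Sum>i\<in>UNIV. \<alpha> i) = d"
begin

lemma garding:
  assumes eU: "e \<in> UU f" and xH: "x \<in> hyp_cone f e"
  shows "x \<in> UU f"
proof -
  have Fx: "mpoly_eval f (cvec x) \<noteq> 0"
    using xH unfolding hc_iff[OF mp hd] by (metis add.right_neutral of_real_0 vector_smult_lzero less_irrefl)
  have Fe: "mpoly_eval f (cvec e) \<noteq> 0" using U_Fnz[OF mp hd eU] .
  have eU': "\<And>v. mpoly_eval f (cvec v + \<i> *s cvec e) \<noteq> 0" using eU unfolding UU_def[OF mp hd] by blast
  have main: "Im \<tau> = 0" if z: "mpoly_eval f (cvec w + \<tau> *s cvec x) = 0" for w \<tau>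
  proof -
    define h where "h = (\<lambda>(\<beta>::real) \<sigma>. mpoly_eval f (cvec (\<beta> *\<^sub>R w) + \<i> *s cvec e + \<sigma> *s cvec x))"
    define Q where "Q = {\<sigma>::complex. 0 \<le> Im \<sigma>}"
    define A where "A = {\<beta>. \<exists>\<sigma>\<in>Q. h \<beta> \<sigma> = 0}"
    have noreal: "Im \<sigma> \<noteq> 0" if "h \<beta> \<sigma> = 0" for \<beta> \<sigma>
    proof
      assume "Im \<sigma> = 0"
      hence "cvec (\<beta> *\<^sub>R w) + \<i> *s cvec e + \<sigma> *s cvec x = cvec (\<beta> *\<^sub>R w + Re \<sigma> *\<^sub>R x) + \<i> *s cvec e"
        by (simp add: vec_eq_iff cvec_def complex_eq_iff)
      thus False using that eU' unfolding h_def by metis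
    qed
    have A0: "0 \<notin> A"
    proof
      assume "0 \<in> A"
      then obtain \<sigma> where \<sigma>: "0 \<le> Im \<sigma>" "h 0 \<sigma> = 0" unfolding A_def Q_def by blast
      hence z0: "mpoly_eval f (\<i> *s cvec e + \<sigma> *s cvec x) = 0" unfolding h_def by (simp add: cvec_zero)
      have "\<sigma> \<noteq> 0"
      proof
        assume "\<sigma> = 0"
        hence "mpoly_eval f (cvec 0 + \<i> *s cvec e) = 0" using z0 by (simp add: cvec_zero)
        thus False using eU' by blast
      qed
      have "\<i> *s cvec e + \<sigma> *s cvec x = \<sigma> *s (cvec x + (\<i> / \<sigma>) *s cvec e)"
        using \<open>\<sigma> \<noteq> 0\<close> by (simp add: vec_eq_iff field_simps)
      hence "\<sigma>^d * mpoly_eval f (cvec x + (\<i> / \<sigma>) *s cvec e) = 0" using z0 hom[OF mp hd] by metis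
      hence z1: "mpoly_eval f (cvec x + (\<i> / \<sigma>) *s cvec e) = 0" using \<open>\<sigma> \<noteq> 0\<close> by simp
      hence "Im (\<i> / \<sigma>) = 0" using U_roots[OF mp hd eU] by blast
      define r where "r = Re (\<i> / \<sigma>)"
      hence eq: "\<i> / \<sigma> = complex_of_real r" using \<open>Im (\<i> / \<sigma>) = 0\<close> by (simp add: complex_eq_iff)
      hence "r < 0" using z1 xH unfolding hc_iff[OF mp hd] by metis
      moreover have "\<i> = \<sigma> * complex_of_real r" using eq \<open>\<sigma> \<noteq> 0\<close> by (simp add: divide_eq_eq mult.commute)
      hence "Im \<i> = Im (\<sigma> * complex_of_real r)" by simp
      hence "1 = Im \<sigma> * r" by simp 
      ultimately have "Im \<sigma> < 0" by (metis mult_nonneg_nonpos not_le less_le zero_less_one not_one_le_zero)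
      thus False using \<sigma>(1) by simp
    qed
    have "open A" unfolding open_contains_ball
    proof
      fix \<beta> assume "\<beta> \<in> A"
      then obtain \<sigma>0 where s0: "0 \<le> Im \<sigma>0" "h \<beta> \<sigma>0 = 0" unfolding A_def Q_def by blast
      hence pos: "0 < Im \<sigma>0" using noreal by force
      obtain \<delta> where "\<delta> > 0" and \<delta>: "\<forall>a'. dist a' (cvec (\<beta> *\<^sub>R w) + \<i> *s cvec e) < \<delta> \<longrightarrow>
           (\<exists>\<tau>. norm (\<tau> - \<sigma>0) < Im \<sigma>0 \<and> mpoly_eval f (a' + \<tau> *s cvec x) = 0)"
        using root_near[OF mp hd Fx _ pos, of "cvec (\<beta> *\<^sub>R w) + \<i> *s cvec e" \<sigma>0] s0(2) unfolding h_def by blast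
      define r where "r = \<delta> / (norm w + 1)"
      have "r > 0" unfolding r_def using \<open>\<delta> > 0\<close> by (simp add: add_nonneg_pos)
      moreover have "ball \<beta> r \<subseteq> A"
      proof
        fix \<beta>' assume "\<beta>' \<in> ball \<beta> r"
        hence "\<bar>\<beta>' - \<beta>\<bar> < r" by (simp add: dist_real_def abs_minus_commute)
        hence "\<bar>\<beta>' - \<beta>\<bar> * (norm w + 1) < \<delta>" unfolding r_def
          by (simp add: pos_less_divide_eq add_nonneg_pos)
        moreover have "\<bar>\<beta>' - \<beta>\<bar> * norm w \<le> \<bar>\<beta>' - \<beta>\<bar> * (norm w + 1)" by (simp add: mult_left_mono)
        moreover have "dist (cvec (\<beta>' *\<^sub>R w) + \<i> *s cvec e) (cvec (\<beta> *\<^sub>R w) + \<i> *s cvec e) = \<bar>\<beta>' - \<beta>\<bar> * norm w"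
          unfolding dist_cvec by (simp add: dist_norm scaleR_diff_left[symmetric])
        ultimately have "dist (cvec (\<beta>' *\<^sub>R w) + \<i> *s cvec e) (cvec (\<beta> *\<^sub>R w) + \<i> *s cvec e) < \<delta>" by linarith
        then obtain \<tau> where \<tau>: "norm (\<tau> - \<sigma>0) < Im \<sigma>0" "h \<beta>' \<tau> = 0" using \<delta> unfolding h_def by blast
        have "\<bar>Im (\<tau> - \<sigma>0)\<bar> < Im \<sigma>0" using \<tau>(1) abs_Im_le_cmod order.strict_trans1 by blast
        hence "0 \<le> Im \<tau>" by simp
        thus "\<beta>' \<in> A" using \<tau>(2) unfolding A_def Q_def by blast
      qed
      ultimately show "\<exists>\<epsilon>>0. ball \<beta> \<epsilon> \<subseteq> A" by blast
    qed
    have "closed A" unfolding A_def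
    proof (rule closed_roots_gen)
      show "continuous_on UNIV (\<lambda>z. h (fst z) (snd z))" unfolding h_def
        by (rule continuous_on_compose2[OF cont_eval]) (auto intro!: continuous_intros cont_cvec cont_smult)
      show "closed Q" unfolding Q_def by (rule closed_Collect_le) (auto intro: continuous_intros)
      fix M
      obtain R where R: "\<forall>a \<sigma>. norm a \<le> M * norm w + norm e \<longrightarrow> mpoly_eval f (a + \<sigma> *s cvec x) = 0 \<longrightarrow> norm \<sigma> \<le> R"
        using root_bound[OF mp hd Fx] by blast
      show "\<exists>R. \<forall>p \<sigma>. norm p \<le> M \<longrightarrow> \<sigma> \<in> Q \<longrightarrow> h p \<sigma> = 0 \<longrightarrow> norm \<sigma> \<le> R"
      proof (rule exI[of _ R], intro allI impI)
        fix p :: real and \<sigma> assume "norm p \<le> M" "\<sigma> \<in> Q" "h p \<sigma> = 0"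
        have "norm (cvec (p *\<^sub>R w) + \<i> *s cvec e) \<le> norm (cvec (p *\<^sub>R w)) + norm (\<i> *s cvec e)"
          by (rule norm_triangle_ineq)
        also have "\<dots> = \<bar>p\<bar> * norm w + norm e" by (simp add: norm_cvec norm_smult_cvec)
        also have "\<dots> \<le> M * norm w + norm e" using \<open>norm p \<le> M\<close> by (simp add: mult_right_mono)
        finally show "norm \<sigma> \<le> R" using R \<open>h p \<sigma> = 0\<close> unfolding h_def by blast
      qed
    qed
    have "A = {}"
    proof -
      have "open (- A)" using \<open>closed A\<close> by (simp add: open_Compl)
      from connectedD[OF connected_UNIV \<open>open A\<close> this]
      have "A \<inter> UNIV = {} \<or> - A \<inter> UNIV = {}" by auto
      thus ?thesis using A0 by auto
    qed
    have key: "Im \<tau>' / \<gamma> < 0" if "\<gamma> \<noteq> 0"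
      "mpoly_eval f (cvec w + (\<i> * complex_of_real \<gamma>) *s cvec e + \<tau>' *s cvec x) = 0" for \<gamma> \<tau>'
    proof (rule ccontr)
      assume "\<not> Im \<tau>' / \<gamma> < 0"
      hence Qin: "\<tau>' / complex_of_real \<gamma> \<in> Q" unfolding Q_def by simp
      have "cvec w + (\<i> * complex_of_real \<gamma>) *s cvec e + \<tau>' *s cvec x
          = complex_of_real \<gamma> *s (cvec ((1/\<gamma>) *\<^sub>R w) + \<i> *s cvec e + (\<tau>' / complex_of_real \<gamma>) *s cvec x)"
        using that(1) by (simp add: vec_eq_iff cvec_def field_simps)
      hence "(complex_of_real \<gamma>)^d * h (1/\<gamma>) (\<tau>' / complex_of_real \<gamma>) = 0"
        using that(2) hom[OF mp hd] unfolding h_def by metis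
      hence "h (1/\<gamma>) (\<tau>' / complex_of_real \<gamma>) = 0" using that(1) by simp
      hence "1/\<gamma> \<in> A" using Qin unfolding A_def by blast
      thus False using \<open>A = {}\<close> by simp
    qed
    show "Im \<tau> = 0"
    proof (rule ccontr)
      assume nz: "Im \<tau> \<noteq> 0"
      hence "\<bar>Im \<tau>\<bar> / 2 > 0" by simp
      from root_near[OF mp hd Fx z this] obtain \<delta> where "\<delta> > 0" and \<delta>: "\<forall>a'. dist a' (cvec w) < \<delta> \<longrightarrow>
           (\<exists>\<tau>'. norm (\<tau>' - \<tau>) < \<bar>Im \<tau>\<bar> / 2 \<and> mpoly_eval f (a' + \<tau>' *s cvec x) = 0)" by blast
      define c where "c = \<delta> / (2 * (norm e + 1))"
      have c: "c > 0" "c * norm e < \<delta>"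
      proof -
        show "c > 0" unfolding c_def using \<open>\<delta> > 0\<close> by (simp add: add_nonneg_pos)
        have "c * norm e \<le> c * (norm e + 1)" using \<open>c > 0\<close> by simp
        also have "\<dots> = \<delta> / 2"
        proof -
          have "norm e + 1 > 0" by (simp add: add_nonneg_pos)
          thus ?thesis unfolding c_def by (simp add: field_simps)
        qed
        finally show "c * norm e < \<delta>" using \<open>\<delta> > 0\<close> by simp
      qed
      define \<gamma> where "\<gamma> = sgn (Im \<tau>) * c"
      have "\<gamma> \<noteq> 0" unfolding \<gamma>_def using nz c by (simp add: sgn_0_0)
      have "\<bar>\<gamma>\<bar> = c" unfolding \<gamma>_def using nz c by (simp add: abs_mult)
      have "dist (cvec w + (\<i> * complex_of_real \<gamma>) *s cvec e) (cvec w) = \<bar>\<gamma>\<bar> * norm e"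
        by (simp add: dist_norm norm_smult_cvec norm_cvec norm_mult)
      hence "dist (cvec w + (\<i> * complex_of_real \<gamma>) *s cvec e) (cvec w) < \<delta>" using c \<open>\<bar>\<gamma>\<bar> = c\<close> by simp
      then obtain \<tau>' where \<tau>': "norm (\<tau>' - \<tau>) < \<bar>Im \<tau>\<bar> / 2"
          "mpoly_eval f (cvec w + (\<i> * complex_of_real \<gamma>) *s cvec e + \<tau>' *s cvec x) = 0" using \<delta> by blast
      have neg: "Im \<tau>' / \<gamma> < 0" using key[OF \<open>\<gamma> \<noteq> 0\<close> \<tau>'(2)] .
      have "\<bar>Im \<tau>' - Im \<tau>\<bar> < \<bar>Im \<tau>\<bar> / 2"
        using \<tau>'(1) abs_Im_le_cmod[of "\<tau>' - \<tau>"] by simp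
      show False
      proof (cases "Im \<tau> > 0")
        case True
        have "Im \<tau>' > 0" using \<open>\<bar>Im \<tau>' - Im \<tau>\<bar> < \<bar>Im \<tau>\<bar> / 2\<close> True by arith
        moreover have "\<gamma> > 0" using c True unfolding \<gamma>_def by simp
        ultimately show False using neg by (simp add: divide_less_0_iff)
      next
        case False
        hence "Im \<tau> < 0" using nz by simp
        have "Im \<tau>' < 0" using \<open>\<bar>Im \<tau>' - Im \<tau>\<bar> < \<bar>Im \<tau>\<bar> / 2\<close> \<open>Im \<tau> < 0\<close> by arith
        moreover have "\<gamma> < 0" using c \<open>Im \<tau> < 0\<close> unfolding \<gamma>_def by simp
        ultimately show False using neg by (simp add: divide_less_0_iff)
      qed
    qed
  qed
  show ?thesis unfolding UU_def[OF mp hd]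
  proof (intro CollectI allI notI)
    fix w assume "mpoly_eval f (cvec w + \<i> *s cvec x) = 0"
    from main[OF this] show False by simp
  qed
qed

end

context
  fixes f :: "('n::finite) cpoly" and d :: nat
  assumes mp: "is_mpoly f" and hd: "\<forall>\<alpha>. f \<alpha> \<noteq> 0 \<longrightarrow> (\<Sum>i\<in>UNIV. \<alpha> i) = d"
begin

lemma H_sub_U: "e \<in> UU f \<Longrightarrow> hyp_cone f e \<subseteq> UU f"
  using garding[OF mp hd] by blast

lemma U_open: "open (UU f)"
proof (rule open_subopen[THEN iffD2], rule ballI)
  fix e assume e: "e \<in> UU f"
  show "\<exists>T. open T \<and> e \<in> T \<and> T \<subseteq> UU f"
  proof -
    have Fe: "mpoly_eval f (cvec e) \<noteq> 0" by (rule U_Fnz[OF mp hd e])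
    have 1: "open (hyp_cone f e)" by (rule H_open[OF mp hd Fe])
    have 2: "e \<in> hyp_cone f e" by (rule H_self[OF mp hd Fe])
    have 3: "hyp_cone f e \<subseteq> UU f" by (rule H_sub_U[OF e])
    show ?thesis using 1 2 3 by blast
  qed
qed

lemma H_closure:
  assumes eU: "e \<in> UU f" and yU: "y \<in> UU f" and cl: "y \<in> closure (hyp_cone f e)"
  shows "y \<in> hyp_cone f e"
  unfolding hc_iff[OF mp hd]
proof (intro allI impI)
  fix t0 :: real assume z: "mpoly_eval f (cvec y + complex_of_real t0 *s cvec e) = 0"
  show "t0 < 0"
  proof (rule ccontr)
    assume "\<not> t0 < 0"
    moreover have "t0 \<noteq> 0" using z U_Fnz[OF mp hd yU] by auto
    ultimately have "t0 > 0" by simp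
    obtain \<delta> where "\<delta> > 0" and \<delta>: "\<forall>a'. dist a' (cvec y) < \<delta> \<longrightarrow>
         (\<exists>\<tau>. norm (\<tau> - complex_of_real t0) < t0 \<and> mpoly_eval f (a' + \<tau> *s cvec e) = 0)"
      using root_near[OF mp hd U_Fnz[OF mp hd eU] z \<open>t0 > 0\<close>] by blast
    obtain y' where y': "y' \<in> hyp_cone f e" "dist y' y < \<delta>"
      using cl \<open>\<delta> > 0\<close> unfolding closure_approachable by blast
    have "dist (cvec y') (cvec y) = dist y' y" by (simp add: dist_norm cvec_diff norm_cvec)
    hence "dist (cvec y') (cvec y) < \<delta>" using y'(2) by simp
    then obtain \<tau> where \<tau>: "norm (\<tau> - complex_of_real t0) < t0" "mpoly_eval f (cvec y' + \<tau> *s cvec e) = 0"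
      using \<delta> by blast
    have "Im \<tau> = 0" using U_roots[OF mp hd eU \<tau>(2)] .
    hence eq: "\<tau> = complex_of_real (Re \<tau>)" by (simp add: complex_eq_iff)
    have "\<bar>Re (\<tau> - complex_of_real t0)\<bar> < t0" using \<tau>(1) abs_Re_le_cmod order.strict_trans1 by blast
    hence "Re \<tau> > 0" by simp
    moreover have "Re \<tau> < 0" using y'(1) \<tau>(2) eq unfolding hc_iff[OF mp hd] by metis
    ultimately show False by simp
  qed
qed

lemma comp_eq:
  assumes eU: "e \<in> UU f"
  shows "connected_component_set (UU f) e = hyp_cone f e"
proof
  have Fe: "mpoly_eval f (cvec e) \<noteq> 0" using U_Fnz[OF mp hd eU] .
  show "hyp_cone f e \<subseteq> connected_component_set (UU f) e"
    by (rule connected_component_maximal[OF H_self[OF mp hd Fe] H_connected[OF mp hd Fe] H_sub_U[OF eU]])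
  define C where "C = connected_component_set (UU f) e"
  have CU: "C \<subseteq> UU f" unfolding C_def by (rule connected_component_subset)
  have "C \<inter> hyp_cone f e = {} \<or> C \<inter> hyp_cone f e = C"
  proof (rule connected_clopen[THEN iffD1, rule_format])
    show "connected C" unfolding C_def by simp
    have "openin (top_of_set C) (C \<inter> hyp_cone f e)"
      by (rule openin_open_Int[OF H_open[OF mp hd Fe]])
    have "C \<inter> hyp_cone f e = C \<inter> closure (hyp_cone f e)"
    proof
      show "C \<inter> hyp_cone f e \<subseteq> C \<inter> closure (hyp_cone f e)" using closure_subset by blast
      show "C \<inter> closure (hyp_cone f e) \<subseteq> C \<inter> hyp_cone f e"
      proof
        fix y assume "y \<in> C \<inter> closure (hyp_cone f e)"
        hence "y \<in> C" "y \<in> UU f" "y \<in> closure (hyp_cone f e)" using CU by auto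
        thus "y \<in> C \<inter> hyp_cone f e" using H_closure[OF eU] by blast
      qed
    qed
    hence "closedin (top_of_set C) (C \<inter> hyp_cone f e)" by (simp add: closedin_closed_Int)
    thus "openin (top_of_set C) (C \<inter> hyp_cone f e) \<and> closedin (top_of_set C) (C \<inter> hyp_cone f e)"
      using \<open>openin (top_of_set C) (C \<inter> hyp_cone f e)\<close> by blast
  qed
  moreover have "e \<in> C \<inter> hyp_cone f e" unfolding C_def using eU H_self[OF mp hd Fe] by simp
  ultimately show "connected_component_set (UU f) e \<subseteq> hyp_cone f e" unfolding C_def by blast
qed

lemma neg_comp:
  assumes "p \<in> UU f"
  shows "uminus ` connected_component_set (UU f) p \<subseteq> connected_component_set (UU f) (- p)"
proof (rule connected_component_maximal)
  show "- p \<in> uminus ` connected_component_set (UU f) p" using assms by simp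
  show "connected (uminus ` connected_component_set (UU f) p)"
    by (rule connected_continuous_image) (simp_all add: continuous_on_minus continuous_on_id)
  show "uminus ` connected_component_set (UU f) p \<subseteq> UU f"
  proof
    fix z assume "z \<in> uminus ` connected_component_set (UU f) p"
    then obtain y where "y \<in> connected_component_set (UU f) p" "z = - y" by blast
    hence "y \<in> UU f" "z = - y" using connected_component_subset by auto
    thus "z \<in> UU f" using U_neg[OF mp hd] by simp
  qed
qed

end

lemma nonconvex_example:
  assumes "CARD('n::finite) \<ge> 2"
  shows "\<exists>g :: 'n cpoly. is_mpoly g \<and> homogeneous_mpoly g \<and> \<not> convex (imag_proj g)"
proof -
  obtain i j :: 'n where ij: "i \<noteq> j"
  proof -
    obtain i :: 'n where True by blast
    have "\<exists>j::'n. j \<noteq> i"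
    proof (rule ccontr)
      assume "\<not> (\<exists>j::'n. j \<noteq> i)"
      hence "(UNIV :: 'n set) = {i}" by auto
      hence "CARD('n) = card {i}" by (rule arg_cong)
      thus False using assms by simp
    qed
    thus ?thesis using that by metis
  qed
  define \<alpha>0 where "\<alpha>0 = (\<lambda>k::'n. if k = i \<or> k = j then 1 else (0::nat))"
  define g where "g = (\<lambda>\<alpha>. if \<alpha> = \<alpha>0 then (1::complex) else 0)"
  have supp: "{\<alpha>. g \<alpha> \<noteq> 0} = {\<alpha>0}" unfolding g_def by auto
  have "is_mpoly g" unfolding is_mpoly_def supp by simp
  have s2: "(\<Sum>k\<in>UNIV. \<alpha>0 k) = 2"
  proof -
    have "(\<Sum>k\<in>UNIV. \<alpha>0 k) = (\<Sum>k\<in>UNIV. (if k = i then 1 else 0) + (if k = j then 1 else (0::nat)))"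
      unfolding \<alpha>0_def using ij by (intro sum.cong) auto
    also have "\<dots> = 2" by (simp add: sum.distrib)
    finally show ?thesis .
  qed
  have "homogeneous_mpoly g" unfolding homogeneous_mpoly_def
    by (rule exI[of _ 2]) (simp add: g_def s2)
  have ev: "mpoly_eval g z = z $ i * z $ j" for z
  proof -
    have "mpoly_eval g z = (\<Prod>k\<in>UNIV. (z $ k) ^ \<alpha>0 k)" unfolding mpoly_eval_def supp by (simp add: g_def)
    also have "\<dots> = (\<Prod>k\<in>UNIV. (if k = i then z $ k else 1) * (if k = j then z $ k else 1))"
      unfolding \<alpha>0_def using ij by (intro prod.cong) auto
    also have "\<dots> = z $ i * z $ j" by (simp add: prod.distrib)
    finally show ?thesis .
  qed
  define u where "u = (\<chi> k. if k = j then 1 else (0::real))"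
  define v where "v = (\<chi> k. if k = i then 1 else (0::real))"
  have "u \<in> imag_proj g" unfolding imag_proj_iff ev
    by (rule exI[of _ 0]) (use ij in \<open>simp add: u_def cvec_def\<close>)
  moreover have "v \<in> imag_proj g" unfolding imag_proj_iff ev
    by (rule exI[of _ 0]) (use ij in \<open>simp add: v_def cvec_def\<close>)
  moreover have "(1/2) *\<^sub>R u + (1/2) *\<^sub>R v \<notin> imag_proj g"
  proof
    assume "(1/2) *\<^sub>R u + (1/2) *\<^sub>R v \<in> imag_proj g"
    then obtain x where x: "(cvec x + \<i> *s cvec ((1/2) *\<^sub>R u + (1/2) *\<^sub>R v)) $ i *
        (cvec x + \<i> *s cvec ((1/2) *\<^sub>R u + (1/2) *\<^sub>R v)) $ j = 0"
      unfolding imag_proj_iff ev by blast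
    have a: "Im ((cvec x + \<i> *s cvec ((1/2) *\<^sub>R u + (1/2) *\<^sub>R v)) $ i) = 1/2"
      using ij by (simp add: u_def v_def cvec_def)
    have b: "Im ((cvec x + \<i> *s cvec ((1/2) *\<^sub>R u + (1/2) *\<^sub>R v)) $ j) = 1/2"
      using ij by (simp add: u_def v_def cvec_def)
    define p where "p = cvec x + \<i> *s cvec ((1/2) *\<^sub>R u + (1/2) *\<^sub>R v)"
    have "p $ i = 0 \<or> p $ j = 0" using x unfolding p_def by (simp only: mult_eq_0_iff)
    thus False
    proof
      assume "p $ i = 0" hence "Im (p $ i) = 0" by simp
      thus False using a unfolding p_def by simp
    next
      assume "p $ j = 0" hence "Im (p $ j) = 0" by simp
      thus False using b unfolding p_def by simp
    qed
  qed
  ultimately have "\<not> convex (imag_proj g)" using convexD[of "imag_proj g" u v "1/2" "1/2"] by auto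
  thus ?thesis using \<open>is_mpoly g\<close> \<open>homogeneous_mpoly g\<close> by blast
qed

theorem corollary2p1:
  fixes f :: "('n::finite) cpoly"
  assumes "is_mpoly f" and "homogeneous_mpoly f"
  shows "closed (imag_proj f)
    \<and> (\<forall>y \<in> imag_proj f. \<forall>a::real. a \<ge> 0 \<longrightarrow> a *\<^sub>R y \<in> imag_proj f)
    \<and> (CARD('n) \<ge> 2 \<longrightarrow> (\<exists>g :: 'n cpoly. is_mpoly g \<and> homogeneous_mpoly g \<and> \<not> convex (imag_proj g)))
    \<and> (\<forall>C \<in> components (- imag_proj f). \<exists>e. hyperbolic f e \<and> C = hyp_cone f e)
    \<and> (\<forall>C \<in> components (- imag_proj f). uminus ` C \<in> components (- imag_proj f))
    \<and> (\<forall>C \<in> components (- imag_proj f). \<not> bounded C)"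
proof -
  note mp = assms(1)
  obtain d where hd: "\<forall>\<alpha>. f \<alpha> \<noteq> 0 \<longrightarrow> (\<Sum>i\<in>UNIV. \<alpha> i) = d"
    using assms(2) unfolding homogeneous_mpoly_def by blast
  have cI: "- imag_proj f = UU f" using imag_U[OF mp hd] by simp
  have c1: "closed (imag_proj f)" unfolding imag_U[OF mp hd] using U_open[OF mp hd] by (rule closed_Compl)
  have c2: "\<forall>y \<in> imag_proj f. \<forall>a::real. a \<ge> 0 \<longrightarrow> a *\<^sub>R y \<in> imag_proj f"
  proof (intro ballI allI impI)
    fix y and a :: real assume "y \<in> imag_proj f" "a \<ge> 0"
    then obtain z where z: "mpoly_eval f z = 0" "y = (\<chi> i. Im (z $ i))"
      unfolding imag_proj_def zero_set_def by blast
    have "mpoly_eval f (complex_of_real a *s z) = 0" using hom[OF mp hd] z(1) by simp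
    moreover have "a *\<^sub>R y = (\<chi> i. Im ((complex_of_real a *s z) $ i))" using z(2) by (simp add: vec_eq_iff)
    ultimately show "a *\<^sub>R y \<in> imag_proj f" unfolding imag_proj_def zero_set_def by blast
  qed
  have c4: "\<forall>C \<in> components (- imag_proj f). \<exists>e. hyperbolic f e \<and> C = hyp_cone f e"
  proof
    fix C assume "C \<in> components (- imag_proj f)"
    then obtain e where e: "e \<in> UU f" "C = connected_component_set (UU f) e"
      unfolding cI components_iff by blast
    show "\<exists>e. hyperbolic f e \<and> C = hyp_cone f e"
      using U_hyp[OF mp hd e(1)] comp_eq[OF mp hd e(1)] e(2) by blast
  qed
  have c5: "\<forall>C \<in> components (- imag_proj f). uminus ` C \<in> components (- imag_proj f)"
  proof
    fix C assume "C \<in> components (- imag_proj f)"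
    then obtain e where e: "e \<in> UU f" "C = connected_component_set (UU f) e"
      unfolding cI components_iff by blast
    have ne: "- e \<in> UU f" using U_neg[OF mp hd e(1)] .
    have "uminus ` C = connected_component_set (UU f) (- e)"
    proof
      show "uminus ` C \<subseteq> connected_component_set (UU f) (- e)" using e(2) neg_comp[OF mp hd e(1)] by simp
      show "connected_component_set (UU f) (- e) \<subseteq> uminus ` C"
      proof
        fix z assume "z \<in> connected_component_set (UU f) (- e)"
        hence "- z \<in> uminus ` connected_component_set (UU f) (- e)" by blast
        hence "- z \<in> C" using neg_comp[OF mp hd ne] e(2) by auto
        thus "z \<in> uminus ` C" by (metis image_eqI minus_minus)
      qed
    qed
    thus "uminus ` C \<in> components (- imag_proj f)" unfolding cI components_iff using ne by blast
  qed
  have c6: "\<forall>C \<in> components (- imag_proj f). \<not> bounded C"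
  proof
    fix C assume "C \<in> components (- imag_proj f)"
    then obtain e where e: "e \<in> UU f" "C = connected_component_set (UU f) e"
      unfolding cI components_iff by blast
    have Fe: "mpoly_eval f (cvec e) \<noteq> 0" using U_Fnz[OF mp hd e(1)] .
    have CH: "C = hyp_cone f e" using comp_eq[OF mp hd e(1)] e(2) by simp
    have eC: "e \<in> C" using CH H_self[OF mp hd Fe] by simp
    obtain r where "r > 0" "ball e r \<subseteq> C" using H_open[OF mp hd Fe] CH eC open_contains_ball by blast
    obtain v where v: "v \<in> C" "v \<noteq> 0"
    proof (cases "e = 0")
      case False thus ?thesis using that eC by blast
    next
      case True
      obtain w :: "real^'n" where "norm w = r / 2" using vector_choose_size \<open>r > 0\<close> by (metis less_eq_real_def half_gt_zero)
      hence "w \<in> ball e r" "w \<noteq> 0" using True \<open>r > 0\<close> by (auto simp: dist_norm)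
      thus ?thesis using that \<open>ball e r \<subseteq> C\<close> by blast
    qed
    show "\<not> bounded C"
    proof
      assume "bounded C"
      then obtain B where B: "\<forall>x\<in>C. norm x \<le> B" unfolding bounded_iff by blast
      define l where "l = (\<bar>B\<bar> + 1) / norm v"
      have "l > 0" unfolding l_def using v(2) by simp
      hence "l *\<^sub>R v \<in> C" using H_scale[OF mp hd] v(1) CH by simp
      moreover have "norm (l *\<^sub>R v) = \<bar>B\<bar> + 1" unfolding l_def using v(2) by simp
      ultimately show False using B by force
    qed
  qed
  show ?thesis using c1 c2 nonconvex_example c4 c5 c6 by blast
qed

end
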